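(* Let $a,b\in\mathbb R$ be such that the cubic $\Gamma_{a,b}:Y^2Z=X^3+aX^2Z+bXZ^2$ is non-singular, let $r_0,r_1\in\mathbb R\setminus\{0\}$ with $(r_0:r_1:1)\in\Gamma_{a,b}$, put $\alpha=r_0^3/r_1^2$, $\beta=a r_0^2/r_1^2$, $\gamma=b r_0/r_1^2$, and let $\Gamma_{\alpha,\beta,\gamma}$ be the curve $y^2x=\alpha+\beta x+\gamma x^2$ (so $\alpha+\beta+\gamma=1$ and $(1,1)\in\Gamma_{\alpha,\beta,\gamma}$), with conjugation $P\mapsto\bar P$ as described in the context. Let $A=(x_0,y_0)$ be an arbitrary but fixed point on $\Gamma_{\alpha,\beta,\gamma}$. For every point $P$ on $\Gamma_{\alpha,\beta,\gamma}$ different from $A$ and $\bar A$, let $g:=AP$ and $\bar g:=A\bar P$. Then the mapping $I_A:g\mapsto\bar g$ is a line involution (of the pencil of lines through $A$).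
   Context: On $\Gamma_{a,b}$ one uses the chord-tangent group law with neutral element the inflection point $\mathcal O=(0:1:0)$; the point $T=(0:0:1)$ has order 2, and the conjugate of a point $P\in\Gamma_{a,b}$ is $\bar P:=T+P$. The projective map $(X:Y:Z)\mapsto(x,y)=\big(r_0Z/X,\ r_0Y/(r_1X)\big)$ (in homogeneous form $(X:Y:Z)\mapsto(r_0Z:r_0Y/r_1:X)$) carries $\Gamma_{a,b}$ onto (the projective closure of) $\Gamma_{\alpha,\beta,\gamma}$ and $(r_0:r_1:1)$ to $(1,1)$; conjugation on $\Gamma_{\alpha,\beta,\gamma}$ is transported via this map. Equivalently, on $\Gamma_{\alpha,\beta,\gamma}$, $\bar P=P+T'$ in the group law with neutral element $(0:1:0)$ (the vertical point at infinity) and $T'=(1:0:0)$ (the horizontal point at infinity). A line involution of the pencil of lines through a point is a map from the pencil to itself which is an involution and preserves cross-ratios of lines. *)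

theory Defs
  imports Complex_Main
begin

definition cubF :: "real \<Rightarrow> real \<Rightarrow> real \<Rightarrow> real \<Rightarrow> real \<Rightarrow> real" where
  "cubF a b X Y Z = Y^2 * Z - X^3 - a * X^2 * Z - b * X * Z^2"

definition cubF_X :: "real \<Rightarrow> real \<Rightarrow> real \<Rightarrow> real \<Rightarrow> real \<Rightarrow> real" where
  "cubF_X a b X Y Z = - 3 * X^2 - 2 * a * X * Z - b * Z^2"

definition cubF_Y :: "real \<Rightarrow> real \<Rightarrow> real \<Rightarrow> real \<Rightarrow> real \<Rightarrow> real" where
  "cubF_Y a b X Y Z = 2 * Y * Z"

definition cubF_Z :: "real \<Rightarrow> real \<Rightarrow> real \<Rightarrow> real \<Rightarrow> real \<Rightarrow> real" where
  "cubF_Z a b X Y Z = Y^2 - a * X^2 - 2 * b * X * Z"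

definition nonsingular_cubic :: "real \<Rightarrow> real \<Rightarrow> bool" where
  "nonsingular_cubic a b \<longleftrightarrow>
     (\<forall>X Y Z. (X, Y, Z) \<noteq> (0, 0, 0) \<and> cubF a b X Y Z = 0 \<longrightarrow>
        \<not> (cubF_X a b X Y Z = 0 \<and> cubF_Y a b X Y Z = 0 \<and> cubF_Z a b X Y Z = 0))"

text \<open>Points of the projective closure of Gamma_{alpha,beta,gamma}: y^2 x = alpha + beta x + gamma x^2,
  homogeneously y^2 x = alpha w^3 + beta x w^2 + gamma x^2 w.  The points at infinity
  are InfV = (0:1:0) (vertical direction, the neutral element) and InfH = (1:0:0)
  (horizontal direction, the point T').\<close>
datatype ppt = Aff real real | InfV | InfH

fun on_curve :: "real \<Rightarrow> real \<Rightarrow> real \<Rightarrow> ppt \<Rightarrow> bool" where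
  "on_curve \<alpha> \<beta> \<gamma> (Aff x y) \<longleftrightarrow> y^2 * x = \<alpha> + \<beta> * x + \<gamma> * x^2"
| "on_curve \<alpha> \<beta> \<gamma> InfV \<longleftrightarrow> True"
| "on_curve \<alpha> \<beta> \<gamma> InfH \<longleftrightarrow> True"

text \<open>Conjugation P |-> P + T' (chord-tangent law, neutral element InfV, T' = InfH).
  For an affine point (x,y): the horizontal line through P and T' meets the curve again in
  (alpha/(gamma x), y); the vertical line through that point and InfV meets it again in
  (alpha/(gamma x), -y).  This is exactly the transport of P |-> T+P on Gamma_{a,b}
  (which sends (X,Y) to (b/X, -bY/X^2)).\<close>
fun conj_pt :: "real \<Rightarrow> real \<Rightarrow> ppt \<Rightarrow> ppt" where
  "conj_pt \<alpha> \<gamma> (Aff x y) = Aff (\<alpha> / (\<gamma> * x)) (- y)"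
| "conj_pt \<alpha> \<gamma> InfV = InfH"
| "conj_pt \<alpha> \<gamma> InfH = InfV"

fun dir_to :: "real \<times> real \<Rightarrow> ppt \<Rightarrow> real \<times> real" where
  "dir_to A (Aff x y) = (x - fst A, y - snd A)"
| "dir_to A InfV = (0, 1)"
| "dir_to A InfH = (1, 0)"

definition line_through :: "real \<times> real \<Rightarrow> real \<times> real \<Rightarrow> (real \<times> real) set" where
  "line_through A d = {(fst A + t * fst d, snd A + t * snd d) | t. True}"

definition pencil :: "real \<times> real \<Rightarrow> (real \<times> real) set set" where
  "pencil A = {line_through A d | d. d \<noteq> (0, 0)}"

definition dir_of_line :: "real \<times> real \<Rightarrow> (real \<times> real) set \<Rightarrow> real \<times> real" where
  "dir_of_line A l = (SOME d. d \<noteq> (0, 0) \<and> l = line_through A d)"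

definition det2 :: "real \<times> real \<Rightarrow> real \<times> real \<Rightarrow> real" where
  "det2 u v = fst u * snd v - snd u * fst v"

text \<open>Cross-ratio (l1,l2;l3,l4) of four lines of the pencil through A (independent of the
  chosen direction vectors).\<close>
definition cross_ratio_lines ::
  "real \<times> real \<Rightarrow> (real \<times> real) set \<Rightarrow> (real \<times> real) set \<Rightarrow> (real \<times> real) set \<Rightarrow> (real \<times> real) set \<Rightarrow> real" where
  "cross_ratio_lines A l1 l2 l3 l4 =
     (let d1 = dir_of_line A l1; d2 = dir_of_line A l2; d3 = dir_of_line A l3; d4 = dir_of_line A l4
      in (det2 d1 d3 * det2 d2 d4) / (det2 d1 d4 * det2 d2 d3))"

definition line_involution :: "real \<times> real \<Rightarrow> ((real \<times> real) set \<Rightarrow> (real \<times> real) set) \<Rightarrow> bool" where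
  "line_involution A f \<longleftrightarrow>
     (\<forall>l\<in>pencil A. f l \<in> pencil A) \<and>
     (\<forall>l\<in>pencil A. f (f l) = l) \<and>
     (\<forall>l1\<in>pencil A. \<forall>l2\<in>pencil A. \<forall>l3\<in>pencil A. \<forall>l4\<in>pencil A.
        distinct [l1, l2, l3, l4] \<longrightarrow>
        cross_ratio_lines A (f l1) (f l2) (f l3) (f l4) = cross_ratio_lines A l1 l2 l3 l4)"

end

theory Submission
  imports Defs
begin

lemma det_scale:
  assumes "d \<noteq> (0,0)" "e \<noteq> (0,0)" "det2 d e = 0"
  shows "\<exists>k. k \<noteq> 0 \<and> e = (k * fst d, k * snd d)"
proof (cases "fst d = 0")
  case True
  then have s: "snd d \<noteq> 0" using assms(1) by (cases d) auto
  have "fst e = 0" using assms(3) True s by (simp add: det2_def)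
  then show ?thesis using s True assms(2)
    by (intro exI[of _ "snd e / snd d"]) (cases e, cases d, auto)
next
  case False
  have "snd e = fst e * snd d / fst d" using assms(3) False
    by (simp add: det2_def field_simps)
  moreover have "fst e \<noteq> 0" using assms(2) calculation by (cases e) auto
  ultimately show ?thesis using False
    by (intro exI[of _ "fst e / fst d"]) (cases e, cases d, auto)
qed

lemma line_scale:
  assumes "k \<noteq> 0"
  shows "line_through A (k * fst d, k * snd d) = line_through A d"
  unfolding line_through_def
proof (intro set_eqI iffI)
  fix p assume "p \<in> {(fst A + t * fst (k * fst d, k * snd d), snd A + t * snd (k * fst d, k * snd d)) |t. True}"
  then obtain t where "p = (fst A + t * (k * fst d), snd A + t * (k * snd d))" by auto
  then show "p \<in> {(fst A + t * fst d, snd A + t * snd d) |t. True}"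
    by (intro CollectI exI[of _ "t*k"]) (simp add: algebra_simps)
next
  fix p assume "p \<in> {(fst A + t * fst d, snd A + t * snd d) |t. True}"
  then obtain t where "p = (fst A + t * fst d, snd A + t * snd d)" by auto
  then show "p \<in> {(fst A + t * fst (k * fst d, k * snd d), snd A + t * snd (k * fst d, k * snd d)) |t. True}"
    using assms by (intro CollectI exI[of _ "t/k"]) simp
qed

lemma line_det:
  assumes "line_through A d = line_through A e"
  shows "det2 d e = 0"
proof -
  have "(fst A + 1 * fst e, snd A + 1 * snd e) \<in> line_through A e"
    unfolding line_through_def by blast
  then have "(fst A + 1 * fst e, snd A + 1 * snd e) \<in> line_through A d" using assms by simp
  then obtain t where "fst e = t * fst d" "snd e = t * snd d"
    unfolding line_through_def by auto
  then show ?thesis by (simp add: det2_def)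
qed

lemma line_eq_det:
  assumes "d \<noteq> (0,0)" "e \<noteq> (0,0)" "det2 d e = 0"
  shows "line_through A e = line_through A d"
  using det_scale[OF assms] line_scale by metis

lemma dir_of_line_lt:
  assumes "d \<noteq> (0,0)"
  shows "\<exists>k. k \<noteq> 0 \<and> dir_of_line A (line_through A d) = (k * fst d, k * snd d)"
proof -
  let ?e = "dir_of_line A (line_through A d)"
  have "?e \<noteq> (0,0) \<and> line_through A d = line_through A ?e"
    unfolding dir_of_line_def by (rule someI[of _ d]) (use assms in auto)
  then show ?thesis using det_scale[OF assms, of ?e] line_det by metis
qed

lemma det2_M:
  "det2 (x0 * snd d1, g * fst d1) (x0 * snd d3, g * fst d3) = - (x0 * g) * det2 d1 d3"
  by (simp add: det2_def algebra_simps)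

lemma det2_sc:
  "det2 (k1 * fst d1, k1 * snd d1) (k3 * fst d3, k3 * snd d3) = k1 * k3 * det2 d1 d3"
  by (simp add: det2_def algebra_simps)

theorem lemma8:
  fixes a b r0 r1 x0 y0 :: real
  assumes nonsing: "nonsingular_cubic a b"
    and r0: "r0 \<noteq> 0" and r1: "r1 \<noteq> 0"
    and r_on: "cubF a b r0 r1 1 = 0"
    and A_on: "on_curve (r0^3 / r1^2) (a * r0^2 / r1^2) (b * r0 / r1^2) (Aff x0 y0)"
  shows "\<exists>f. line_involution (x0, y0) f \<and>
           (\<forall>P. on_curve (r0^3 / r1^2) (a * r0^2 / r1^2) (b * r0 / r1^2) P \<and>
                P \<noteq> Aff x0 y0 \<and> P \<noteq> conj_pt (r0^3 / r1^2) (b * r0 / r1^2) (Aff x0 y0) \<longrightarrow>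
                f (line_through (x0, y0) (dir_to (x0, y0) P)) =
                line_through (x0, y0) (dir_to (x0, y0) (conj_pt (r0^3 / r1^2) (b * r0 / r1^2) P)))"
proof -
  define al where "al = r0^3 / r1^2"
  define be where "be = a * r0^2 / r1^2"
  define g where "g = b * r0 / r1^2"
  define A where "A = (x0, y0)"
  have b0: "b \<noteq> 0"
  proof
    assume "b = 0"
    then show False using nonsing unfolding nonsingular_cubic_def
      by (drule_tac x=0 in spec, drule_tac x=0 in spec, drule_tac x=1 in spec)
        (simp add: cubF_def cubF_X_def cubF_Y_def cubF_Z_def)
  qed
  have al0: "al \<noteq> 0" using r0 r1 by (simp add: al_def)
  have g0: "g \<noteq> 0" using r0 r1 b0 by (simp add: g_def)
  have onc: "\<And>x y. on_curve al be g (Aff x y) \<Longrightarrow> x \<noteq> 0" using al0 by auto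
  have x00: "x0 \<noteq> 0" using onc A_on al_def be_def g_def by blast
  define M where "M = (\<lambda>d::real\<times>real. (x0 * snd d, g * fst d))"
  have Mnz: "M d \<noteq> (0,0)" if "d \<noteq> (0,0)" for d
    using that x00 g0 by (cases d) (auto simp: M_def)
  have Msc: "M (k * fst d, k * snd d) = (k * fst (M d), k * snd (M d))" for k d
    by (simp add: M_def)
  define f where "f = (\<lambda>l. line_through A (M (dir_of_line A l)))"
  have dirp: "dir_of_line A l \<noteq> (0,0) \<and> line_through A (dir_of_line A l) = l" if lp: "l \<in> pencil A" for l
  proof -
    obtain d where d: "d \<noteq> (0,0)" "l = line_through A d" using lp unfolding pencil_def by blast
    obtain k where k: "k \<noteq> 0" "dir_of_line A (line_through A d) = (k * fst d, k * snd d)"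
      using dir_of_line_lt[OF d(1), of A] by blast
    have "(k * fst d, k * snd d) \<noteq> (0,0)" using k(1) d(1) by (cases d) auto
    then show ?thesis using k d(2) line_scale[OF k(1)] by simp
  qed
  have fl: "f (line_through A d) = line_through A (M d)" if dn: "d \<noteq> (0,0)" for d
  proof -
    obtain k where k: "k \<noteq> 0" "dir_of_line A (line_through A d) = (k * fst d, k * snd d)"
      using dir_of_line_lt[OF dn] by blast
    show ?thesis unfolding f_def k(2) Msc line_scale[OF k(1)] ..
  qed
  have inv: "line_involution A f"
    unfolding line_involution_def
  proof (intro conjI ballI impI)
    fix l assume l: "l \<in> pencil A"
    show "f l \<in> pencil A" unfolding f_def pencil_def using Mnz dirp[OF l] by blast
    have "f (f l) = f (line_through A (M (dir_of_line A l)))" by (simp add: f_def)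
    also have "\<dots> = line_through A (M (M (dir_of_line A l)))"
      using fl Mnz dirp[OF l] by blast
    also have "M (M (dir_of_line A l)) = ((x0*g) * fst (dir_of_line A l), (x0*g) * snd (dir_of_line A l))"
      by (simp add: M_def)
    also have "line_through A \<dots> = l" using line_scale x00 g0 dirp[OF l] by simp
    finally show "f (f l) = l" .
  next
    fix l1 l2 l3 l4 assume l: "l1 \<in> pencil A" "l2 \<in> pencil A" "l3 \<in> pencil A" "l4 \<in> pencil A"
    have key: "\<exists>k. k \<noteq> 0 \<and> dir_of_line A (f l) = (k * fst (M (dir_of_line A l)), k * snd (M (dir_of_line A l)))"
      if "l \<in> pencil A" for l
      unfolding f_def using dir_of_line_lt Mnz dirp[OF that] by blast
    obtain k1 where k1: "k1 \<noteq> 0" "dir_of_line A (f l1) = (k1 * fst (M (dir_of_line A l1)), k1 * snd (M (dir_of_line A l1)))" using key l by blast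
    obtain k2 where k2: "k2 \<noteq> 0" "dir_of_line A (f l2) = (k2 * fst (M (dir_of_line A l2)), k2 * snd (M (dir_of_line A l2)))" using key l by blast
    obtain k3 where k3: "k3 \<noteq> 0" "dir_of_line A (f l3) = (k3 * fst (M (dir_of_line A l3)), k3 * snd (M (dir_of_line A l3)))" using key l by blast
    obtain k4 where k4: "k4 \<noteq> 0" "dir_of_line A (f l4) = (k4 * fst (M (dir_of_line A l4)), k4 * snd (M (dir_of_line A l4)))" using key l by blast
    define D where "D = - (x0 * g)"
    have D0: "D \<noteq> 0" using x00 g0 by (simp add: D_def)
    have dM: "det2 (M u) (M v) = D * det2 u v" for u v
      unfolding M_def D_def by (rule det2_M)
    show "cross_ratio_lines A (f l1) (f l2) (f l3) (f l4) = cross_ratio_lines A l1 l2 l3 l4"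
      unfolding cross_ratio_lines_def Let_def k1(2) k2(2) k3(2) k4(2) det2_sc prod.collapse dM
      using k1(1) k2(1) k3(1) k4(1) D0
      by (simp add: field_simps)
  qed
  have main: "f (line_through A (dir_to A P)) = line_through A (dir_to A (conj_pt al g P))"
    if P: "on_curve al be g P" "P \<noteq> Aff x0 y0" "P \<noteq> conj_pt al g (Aff x0 y0)" for P
  proof -
    have d1: "dir_to A P \<noteq> (0,0)" using P(2) by (cases P) (auto simp: A_def)
    have cc: "conj_pt al g (conj_pt al g Q) = Q" if "on_curve al be g Q" for Q
      using that onc g0 al0 by (cases Q) (auto simp: field_simps)
    have d2: "dir_to A (conj_pt al g P) \<noteq> (0,0)"
    proof
      assume "dir_to A (conj_pt al g P) = (0,0)"
      then have "conj_pt al g P = Aff x0 y0" by (cases P) (auto simp: A_def)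
      then show False using P cc by metis
    qed
    have dt: "det2 (M (dir_to A P)) (dir_to A (conj_pt al g P)) = 0"
    proof (cases P)
      case (Aff x y)
      have x: "x \<noteq> 0" using onc P(1) Aff by blast
      have e1: "y^2 * x = al + be * x + g * x^2" using P(1) Aff by simp
      have e0: "y0^2 * x0 = al + be * x0 + g * x0^2" using A_on by (simp add: al_def be_def g_def)
      have h: "(y^2 - y0^2) * (x * x0) = (x - x0) * (g * x * x0 - al)"
      proof -
        have "(y^2 - y0^2) * (x * x0) = x0 * (y^2 * x) - x * (y0^2 * x0)" by (simp add: algebra_simps)
        also have "\<dots> = (x - x0) * (g * x * x0 - al)" unfolding e1 e0 by (simp add: algebra_simps power2_eq_square)
        finally show ?thesis .
      qed
      have dd: "det2 (M (dir_to A P)) (dir_to A (conj_pt al g P)) =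
            x0*(y-y0)*(-y-y0) - (x-x0) * (g*(al/(g*x) - x0))"
        using Aff by (simp add: M_def A_def det2_def)
      have gg: "(g*(al/(g*x) - x0)) * x = al - g*x*x0" using x g0 by (simp add: field_simps)
      have "x * det2 (M (dir_to A P)) (dir_to A (conj_pt al g P)) =
            - (x * x0) * (y^2 - y0^2) - (x - x0) * ((g*(al/(g*x) - x0)) * x)"
        unfolding dd by (simp add: algebra_simps power2_eq_square)
      also have "\<dots> = 0" unfolding gg using h by (simp add: algebra_simps)
      finally show ?thesis using x by simp
    qed (auto simp: M_def A_def det2_def)
    have "f (line_through A (dir_to A P)) = line_through A (M (dir_to A P))" using fl d1 by blast
    also have "\<dots> = line_through A (dir_to A (conj_pt al g P))"
      using line_eq_det[OF Mnz[OF d1] d2 dt] by simp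
    finally show ?thesis .
  qed
  show ?thesis
    apply (rule exI[of _ f])
    using inv main unfolding A_def al_def be_def g_def by blast
qed

end
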